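(* Let $X$ be a set. For any totally bounded uniformity $\mathcal{U}$ on $X$ we have $\mathcal{U} =_T [\kappa]^{<\omega}$, where $\kappa=\operatorname{cof}(\mathcal{U})$. More generally, for any uniformity $\mathcal{U}$ on $X$ and any totally bounded subset $S\subseteq X$ we have $\mathcal{U}\restriction S =_T [\kappa]^{<\omega}$, where $\kappa=\operatorname{cof}(\mathcal{U}\restriction S)$.
   Context: Uniformities are ordered by reverse inclusion. For $U$ in a uniformity and $x\in X$, $U[x]=\{y:(x,y)\in U\}$. A uniformity $\mathcal{U}$ on $X$ is totally bounded if for every $U\in\mathcal{U}$ there is a finite $F\subseteq X$ with $\bigcup_{x\in F}U[x]=X$; a subset $S$ is totally bounded if the induced uniformity $\mathcal{U}\restriction S=\{U\cap S^2:U\in\mathcal{U}\}$ on $S$ is totally bounded. $\operatorname{cof}(P)$ is the least size of a cofinal subset of a directed set $P$. $[\kappa]^{<\omega}$ is the set of finite subsets of $\kappa$ ordered by inclusion. For directed sets $P,Q$, $P \ge_T Q$ means there is a map $\phi:P\to Q$ such that $\phi(C)$ is cofinal in $Q$ for every cofinal $C\subseteq P$; $P =_T Q$ means $P\ge_T Q$ and $Q \ge_T P$. *)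

theory Defs
  imports Main
begin

definition uniformity :: "'a set \<Rightarrow> ('a \<times> 'a) set set \<Rightarrow> bool" where
  "uniformity X \<U> \<longleftrightarrow>
     \<U> \<noteq> {} \<and>
     (\<forall>U\<in>\<U>. U \<subseteq> X \<times> X) \<and>
     (\<forall>U\<in>\<U>. Id_on X \<subseteq> U) \<and>
     (\<forall>U\<in>\<U>. \<forall>V. U \<subseteq> V \<and> V \<subseteq> X \<times> X \<longrightarrow> V \<in> \<U>) \<and>
     (\<forall>U\<in>\<U>. \<forall>V\<in>\<U>. U \<inter> V \<in> \<U>) \<and>
     (\<forall>U\<in>\<U>. converse U \<in> \<U>) \<and>
     (\<forall>U\<in>\<U>. \<exists>V\<in>\<U>. V O V \<subseteq> U)"

definition restr_unif :: "('a \<times> 'a) set set \<Rightarrow> 'a set \<Rightarrow> ('a \<times> 'a) set set" where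
  "restr_unif \<U> S = (\<lambda>U. U \<inter> (S \<times> S)) ` \<U>"

definition totally_bounded_unif :: "'a set \<Rightarrow> ('a \<times> 'a) set set \<Rightarrow> bool" where
  "totally_bounded_unif X \<U> \<longleftrightarrow>
     (\<forall>U\<in>\<U>. \<exists>F. finite F \<and> F \<subseteq> X \<and> (\<Union>x\<in>F. U `` {x}) = X)"

definition totally_bounded_subset :: "('a \<times> 'a) set set \<Rightarrow> 'a set \<Rightarrow> bool" where
  "totally_bounded_subset \<U> S \<longleftrightarrow> totally_bounded_unif S (restr_unif \<U> S)"

text \<open>Directed sets are given by a carrier P and an order le (le p q means p is below q).\<close>
definition cofinal_in :: "'p set \<Rightarrow> ('p \<Rightarrow> 'p \<Rightarrow> bool) \<Rightarrow> 'p set \<Rightarrow> bool" where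
  "cofinal_in P le C \<longleftrightarrow> C \<subseteq> P \<and> (\<forall>p\<in>P. \<exists>c\<in>C. le p c)"

text \<open>C is a cofinal subset of least cardinality, so |C| = cof(P).\<close>
definition min_cofinal :: "'p set \<Rightarrow> ('p \<Rightarrow> 'p \<Rightarrow> bool) \<Rightarrow> 'p set \<Rightarrow> bool" where
  "min_cofinal P le C \<longleftrightarrow> cofinal_in P le C \<and>
     (\<forall>C'. cofinal_in P le C' \<longrightarrow> ordLeq3 (card_of C) (card_of C'))"

definition tukey_ge :: "'p set \<Rightarrow> ('p \<Rightarrow> 'p \<Rightarrow> bool) \<Rightarrow> 'q set \<Rightarrow> ('q \<Rightarrow> 'q \<Rightarrow> bool) \<Rightarrow> bool" where
  "tukey_ge P leP Q leQ \<longleftrightarrow>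
     (\<exists>\<phi>. (\<forall>p\<in>P. \<phi> p \<in> Q) \<and>
          (\<forall>C. cofinal_in P leP C \<longrightarrow> cofinal_in Q leQ (\<phi> ` C)))"

definition tukey_eq :: "'p set \<Rightarrow> ('p \<Rightarrow> 'p \<Rightarrow> bool) \<Rightarrow> 'q set \<Rightarrow> ('q \<Rightarrow> 'q \<Rightarrow> bool) \<Rightarrow> bool" where
  "tukey_eq P leP Q leQ \<longleftrightarrow> tukey_ge P leP Q leQ \<and> tukey_ge Q leQ P leP"

definition rev_incl :: "'b set \<Rightarrow> 'b set \<Rightarrow> bool" where
  "rev_incl U V \<longleftrightarrow> V \<subseteq> U"

definition fin_subsets :: "'k set \<Rightarrow> 'k set set" where
  "fin_subsets K = {A. A \<subseteq> K \<and> finite A}"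

end

theory Submission
  imports Defs "HOL-Algebra.Free_Abelian_Groups"
begin

lemma unifD:
  assumes "uniformity X U"
  shows unif_ne: "U \<noteq> {}" and unif_sub: "V \<in> U \<Longrightarrow> V \<subseteq> X \<times> X"
    and unif_Id: "V \<in> U \<Longrightarrow> Id_on X \<subseteq> V"
    and unif_up: "V \<in> U \<Longrightarrow> V \<subseteq> W \<Longrightarrow> W \<subseteq> X \<times> X \<Longrightarrow> W \<in> U"
    and unif_int: "V \<in> U \<Longrightarrow> W \<in> U \<Longrightarrow> V \<inter> W \<in> U"
    and unif_conv: "V \<in> U \<Longrightarrow> converse V \<in> U"
    and unif_half: "V \<in> U \<Longrightarrow> \<exists>W\<in>U. W O W \<subseteq> V"
  using assms unfolding uniformity_def by metis+


lemma unif_refl: "uniformity X U \<Longrightarrow> V \<in> U \<Longrightarrow> x \<in> X \<Longrightarrow> (x, x) \<in> V"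
  using unif_Id by (metis Id_onI subsetD)

lemma unif_XX: "uniformity X U \<Longrightarrow> X \<times> X \<in> U"
proof -
  assume u: "uniformity X U"
  then obtain V where v: "V \<in> U" using unif_ne by blast
  show ?thesis by (rule unif_up[OF u v unif_sub[OF u v]]) simp
qed

lemma unif_fin_int:
  assumes u: "uniformity X U" and f: "finite F" and s: "F \<subseteq> U"
  shows "X \<times> X \<inter> \<Inter> F \<in> U"
  using f s
proof (induction F rule: finite_induct)
  case empty
  then show ?case using unif_XX[OF u] by simp
next
  case (insert x F)
  then have "x \<inter> (X \<times> X \<inter> \<Inter> F) \<in> U" using unif_int[OF u] by simp
  moreover have "X \<times> X \<inter> \<Inter> (insert x F) = x \<inter> (X \<times> X \<inter> \<Inter> F)" by auto
  ultimately show ?case by simp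
qed

lemma unif_half_sym:
  assumes u: "uniformity X U" and v: "V \<in> U"
  shows "\<exists>W\<in>U. converse W = W \<and> W O W \<subseteq> V"
proof -
  obtain V' where v': "V' \<in> U" "V' O V' \<subseteq> V" using unif_half[OF u v] by blast
  have "converse V' \<in> U" using unif_conv[OF u v'(1)] .
  then have "V' \<inter> converse V' \<in> U" using unif_int[OF u v'(1)] by blast
  moreover have "converse (V' \<inter> converse V') = V' \<inter> converse V'" by auto
  moreover have "(V' \<inter> converse V') O (V' \<inter> converse V') \<subseteq> V" using v'(2) by blast
  ultimately show ?thesis by blast
qed

lemma unif_sq: "uniformity X U \<Longrightarrow> W \<in> U \<Longrightarrow> W \<subseteq> W O W"
proof
  fix p assume u: "uniformity X U" and w: "W \<in> U" and p: "p \<in> W"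
  obtain a b where ab: "p = (a, b)" by force
  have "a \<in> X" using unif_sub[OF u w] p ab by blast
  then have "(a, a) \<in> W" using unif_refl[OF u w] by blast
  then show "p \<in> W O W" using p ab by blast
qed

lemma restr_uniformity:
  assumes u: "uniformity X U" and s: "S \<subseteq> X"
  shows "uniformity S (restr_unif U S)"
proof -
  have ne: "restr_unif U S \<noteq> {}" using unif_ne[OF u] unfolding restr_unif_def by blast
  have sub: "\<forall>V\<in>restr_unif U S. V \<subseteq> S \<times> S" unfolding restr_unif_def by blast
  have refl: "\<forall>V\<in>restr_unif U S. Id_on S \<subseteq> V"
  proof
    fix V assume "V \<in> restr_unif U S"
    then obtain V0 where V0: "V0 \<in> U" "V = V0 \<inter> S \<times> S" unfolding restr_unif_def by blast
    have "Id_on X \<subseteq> V0" using unif_Id[OF u V0(1)] .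
    then show "Id_on S \<subseteq> V" using V0(2) s unfolding Id_on_def by blast
  qed
  have up: "\<forall>V\<in>restr_unif U S. \<forall>W. V \<subseteq> W \<and> W \<subseteq> S \<times> S \<longrightarrow> W \<in> restr_unif U S"
  proof (intro ballI allI impI)
    fix V W assume V: "V \<in> restr_unif U S" and W: "V \<subseteq> W \<and> W \<subseteq> S \<times> S"
    then obtain V0 where V0: "V0 \<in> U" "V = V0 \<inter> S \<times> S" unfolding restr_unif_def by blast
    have s1: "V0 \<union> W \<subseteq> X \<times> X" using unif_sub[OF u V0(1)] W s by blast
    have "V0 \<union> W \<in> U" by (rule unif_up[OF u V0(1) _ s1]) simp
    moreover have "W = (V0 \<union> W) \<inter> S \<times> S" using W V0 by blast
    ultimately show "W \<in> restr_unif U S" unfolding restr_unif_def by blast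
  qed
  have int: "\<forall>V\<in>restr_unif U S. \<forall>W\<in>restr_unif U S. V \<inter> W \<in> restr_unif U S"
  proof (intro ballI)
    fix V W assume "V \<in> restr_unif U S" "W \<in> restr_unif U S"
    then obtain V0 W0 where VW: "V0 \<in> U" "W0 \<in> U" "V = V0 \<inter> S \<times> S" "W = W0 \<inter> S \<times> S"
      unfolding restr_unif_def by blast
    have "V0 \<inter> W0 \<in> U" using unif_int[OF u VW(1,2)] .
    moreover have "V \<inter> W = (V0 \<inter> W0) \<inter> S \<times> S" using VW by blast
    ultimately show "V \<inter> W \<in> restr_unif U S" unfolding restr_unif_def by blast
  qed
  have conv: "\<forall>V\<in>restr_unif U S. converse V \<in> restr_unif U S"
  proof
    fix V assume "V \<in> restr_unif U S"
    then obtain V0 where V0: "V0 \<in> U" "V = V0 \<inter> S \<times> S" unfolding restr_unif_def by blast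
    have "converse V0 \<in> U" using unif_conv[OF u V0(1)] .
    moreover have "converse V = converse V0 \<inter> S \<times> S" using V0 by auto
    ultimately show "converse V \<in> restr_unif U S" unfolding restr_unif_def by blast
  qed
  have half: "\<forall>V\<in>restr_unif U S. \<exists>W\<in>restr_unif U S. W O W \<subseteq> V"
  proof
    fix V assume "V \<in> restr_unif U S"
    then obtain V0 where V0: "V0 \<in> U" "V = V0 \<inter> S \<times> S" unfolding restr_unif_def by blast
    obtain W0 where W0: "W0 \<in> U" "W0 O W0 \<subseteq> V0" using unif_half[OF u V0(1)] by blast
    have "(W0 \<inter> S \<times> S) O (W0 \<inter> S \<times> S) \<subseteq> V" using W0 V0 by blast
    moreover have "W0 \<inter> S \<times> S \<in> restr_unif U S" using W0 unfolding restr_unif_def by blast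
    ultimately show "\<exists>W\<in>restr_unif U S. W O W \<subseteq> V" by blast
  qed
  show ?thesis unfolding uniformity_def
    using ne sub refl up int conv half by (intro conjI) assumption+
qed

lemma tukey_fin_ge:
  assumes u: "uniformity X U" and c: "cofinal_in U rev_incl C" and k: "ordIso2 (card_of K) (card_of C)"
  shows "tukey_ge (fin_subsets K) (\<subseteq>) U rev_incl"
proof -
  obtain c where bc: "bij_betw c K C" using k card_of_ordIso by blast
  define \<psi> where "\<psi> F = X \<times> X \<inter> \<Inter> (c ` F)" for F
  have CU: "C \<subseteq> U" using c unfolding cofinal_in_def by blast
  have inU: "\<psi> F \<in> U" if "F \<in> fin_subsets K" for F
  proof -
    have F: "F \<subseteq> K" "finite F" using that unfolding fin_subsets_def by auto
    have "c ` F \<subseteq> C" using F bc unfolding bij_betw_def by blast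
    then show ?thesis unfolding \<psi>_def using unif_fin_int[OF u, of "c ` F"] CU F by blast
  qed
  have "cofinal_in U rev_incl (\<psi> ` D)" if D: "cofinal_in (fin_subsets K) (\<subseteq>) D" for D
    unfolding cofinal_in_def
  proof (intro conjI ballI)
    show "\<psi> ` D \<subseteq> U" using D inU unfolding cofinal_in_def by blast
    fix p assume p: "p \<in> U"
    then obtain c0 where c0: "c0 \<in> C" "c0 \<subseteq> p" using c unfolding cofinal_in_def rev_incl_def by blast
    then obtain k where kk: "k \<in> K" "c k = c0" using bc unfolding bij_betw_def by blast
    have "{k} \<in> fin_subsets K" using kk unfolding fin_subsets_def by blast
    then obtain d where d: "d \<in> D" "{k} \<subseteq> d" using D unfolding cofinal_in_def by blast
    have "\<psi> d \<subseteq> p" unfolding \<psi>_def using d kk c0 by blast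
    then show "\<exists>c\<in>\<psi> ` D. rev_incl p c" using d unfolding rev_incl_def by blast
  qed
  then show ?thesis unfolding tukey_ge_def using inU by blast
qed



definition EE :: "'a set \<Rightarrow> 'a set \<Rightarrow> 'a set \<Rightarrow> ('a \<times> 'a) set" where
  "EE X P Q = ((X - P) \<times> (X - P)) \<union> (Q \<times> Q)"

definition qA :: "'a set \<times> 'a set \<times> 'a set \<times> 'a set \<Rightarrow> 'a set" where "qA q = fst q"
definition qB :: "'a set \<times> 'a set \<times> 'a set \<times> 'a set \<Rightarrow> 'a set" where "qB q = fst (snd q)"
definition qM :: "'a set \<times> 'a set \<times> 'a set \<times> 'a set \<Rightarrow> 'a set" where "qM q = fst (snd (snd q))"
definition qC :: "'a set \<times> 'a set \<times> 'a set \<times> 'a set \<Rightarrow> 'a set" where "qC q = snd (snd (snd q))"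

definition adm :: "'a set \<Rightarrow> ('a \<times> 'a) set set \<Rightarrow> 'a set \<times> 'a set \<times> 'a set \<times> 'a set \<Rightarrow> bool" where
  "adm X U q \<longleftrightarrow> qA q \<subseteq> X \<and> qB q \<subseteq> X \<and> qM q \<subseteq> X \<and> qC q \<subseteq> X \<and>
     EE X (qA q) (qB q) \<in> U \<and> EE X (qB q) (qM q) \<in> U \<and> EE X (qM q) (qC q) \<in> U"

definition sep :: "'a set \<times> 'a set \<times> 'a set \<times> 'a set \<Rightarrow> 'a set \<times> 'a set \<times> 'a set \<times> 'a set \<Rightarrow> bool" where
  "sep q q' \<longleftrightarrow> \<not> (qA q' \<subseteq> qB q \<and> qM q \<subseteq> qC q') \<or> \<not> (qA q \<subseteq> qB q' \<and> qM q' \<subseteq> qC q)"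

definition Ek :: "'a set \<Rightarrow> 'a set \<times> 'a set \<times> 'a set \<times> 'a set \<Rightarrow> ('a \<times> 'a) set" where
  "Ek X q = EE X (qA q) (qB q) \<inter> EE X (qM q) (qC q)"

definition goodfam where
  "goodfam X U Q \<longleftrightarrow> (\<forall>q\<in>Q. adm X U q) \<and> (\<forall>q\<in>Q. \<forall>q'\<in>Q. q \<noteq> q' \<longrightarrow> sep q q')"

lemma tbD: "totally_bounded_unif X U \<Longrightarrow> W \<in> U \<Longrightarrow> \<exists>F. finite F \<and> F \<subseteq> X \<and> (\<Union>x\<in>F. W``{x}) = X"
  unfolding totally_bounded_unif_def by (rule bspec)

lemma goodD: "goodfam X U Q \<Longrightarrow> q \<in> Q \<Longrightarrow> q' \<in> Q \<Longrightarrow> q \<noteq> q' \<Longrightarrow> sep q q'"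
  "goodfam X U Q \<Longrightarrow> q \<in> Q \<Longrightarrow> adm X U q"
  unfolding goodfam_def by blast+

lemma close:
  assumes "converse W = W" "W O W \<subseteq> V" "V \<subseteq> EE X P Q" "R \<subseteq> X"
    "(\<Union>n\<in>N. W``{n}) = X"
    "{n\<in>N. W``{n} \<inter> R \<noteq> {}} = {n\<in>N. W``{n} \<inter> P \<noteq> {}}"
  shows "R \<subseteq> Q"
proof
  fix r assume r: "r \<in> R"
  then have "r \<in> X" using assms(4) by blast
  then obtain n where n: "n \<in> N" "r \<in> W``{n}" using assms(5) by blast
  then have "n \<in> {n\<in>N. W``{n} \<inter> R \<noteq> {}}" using r by blast
  then have "n \<in> {n\<in>N. W``{n} \<inter> P \<noteq> {}}" using assms(6) by simp
  then obtain p where p: "p \<in> W``{n}" "p \<in> P" by blast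
  have "(p, n) \<in> W" using p(1) assms(1) by (metis Image_singleton_iff converse.intros)
  moreover have "(n, r) \<in> W" using n(2) by blast
  ultimately have "(p, r) \<in> V" using assms(2) by blast
  then have "(p, r) \<in> EE X P Q" using assms(3) by blast
  then show "r \<in> Q" using p(2) unfolding EE_def by blast
qed

lemma incidence:
  assumes u: "uniformity X U" and tb: "totally_bounded_unif X U" and v: "V \<in> U"
    and g: "goodfam X U Q"
  shows "finite {q\<in>Q. V \<subseteq> Ek X q}"
proof -
  obtain W where W: "W \<in> U" "converse W = W" "W O W \<subseteq> V" using unif_half_sym[OF u v] by blast
  obtain N where N: "finite N" "N \<subseteq> X" "(\<Union>n\<in>N. W``{n}) = X"
    using tbD[OF tb W(1)] by blast
  define S where "S = {q\<in>Q. V \<subseteq> Ek X q}"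
  define ty where "ty q = ({n\<in>N. W``{n} \<inter> qA q \<noteq> {}}, {n\<in>N. W``{n} \<inter> qM q \<noteq> {}})" for q
  have key: "qA q' \<subseteq> qB q \<and> qM q \<subseteq> qC q'" if "q \<in> S" "q' \<in> S" "ty q = ty q'" for q q'
  proof
    have "q \<in> Q" "q' \<in> Q" using that(1,2) unfolding S_def by auto
    then have aq': "adm X U q'" "adm X U q" using goodD(2)[OF g] by auto
    have "V \<subseteq> EE X (qA q) (qB q)" using that(1) unfolding S_def Ek_def by blast
    moreover have "{n\<in>N. W``{n} \<inter> qA q' \<noteq> {}} = {n\<in>N. W``{n} \<inter> qA q \<noteq> {}}"
      using that(3) unfolding ty_def by simp
    moreover have "qA q' \<subseteq> X" using aq' unfolding adm_def by blast
    ultimately show "qA q' \<subseteq> qB q" using close[OF W(2,3) _ _ N(3)] by blast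
    have "V \<subseteq> EE X (qM q') (qC q')" using that(2) unfolding S_def Ek_def by blast
    moreover have "{n\<in>N. W``{n} \<inter> qM q \<noteq> {}} = {n\<in>N. W``{n} \<inter> qM q' \<noteq> {}}"
      using that(3) unfolding ty_def by simp
    moreover have "qM q \<subseteq> X" using aq' unfolding adm_def by blast
    ultimately show "qM q \<subseteq> qC q'" using close[OF W(2,3) _ _ N(3)] by blast
  qed
  have inj: "inj_on ty S"
  proof (rule inj_onI, rule ccontr)
    fix q q' assume q: "q \<in> S" "q' \<in> S" "ty q = ty q'" "q \<noteq> q'"
    have "q \<in> Q" "q' \<in> Q" using q(1,2) unfolding S_def by auto
    then have "sep q q'" using goodD(1)[OF g] q(4) by blast
    moreover have "qA q' \<subseteq> qB q \<and> qM q \<subseteq> qC q'" using key[OF q(1) q(2) q(3)] .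
    moreover have "qA q \<subseteq> qB q' \<and> qM q' \<subseteq> qC q" using key[OF q(2) q(1) q(3)[symmetric]] .
    ultimately show False unfolding sep_def by blast
  qed
  have "ty ` S \<subseteq> Pow N \<times> Pow N" unfolding ty_def by blast
  then have "finite (ty ` S)" using N(1) by (meson finite_Pow_iff finite_SigmaI finite_subset)
  then show ?thesis using finite_imageD[OF _ inj] unfolding S_def by blast
qed



lemma EE_W:
  assumes u: "uniformity X U" and w: "W \<in> U" and s: "converse W = W" and r: "R \<subseteq> X"
  shows "EE X R (W``R) \<in> U" "W``R \<subseteq> X" "R \<subseteq> W``R"
proof -
  have WX: "W \<subseteq> X \<times> X" using unif_sub[OF u w] .
  show sub: "W``R \<subseteq> X" using WX by blast
  show RW: "R \<subseteq> W``R"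
  proof
    fix x assume "x \<in> R"
    moreover then have "(x, x) \<in> W" using unif_refl[OF u w] r by blast
    ultimately show "x \<in> W``R" by blast
  qed
  have "W \<subseteq> EE X R (W``R)"
  proof
    fix p assume p: "p \<in> W"
    obtain x y where xy: "p = (x, y)" by force
    have xX: "x \<in> X" "y \<in> X" using WX p xy by auto
    have c: "(y, x) \<in> W" using p xy s by (metis converse.intros)
    show "p \<in> EE X R (W``R)"
    proof (cases "x \<in> R \<or> y \<in> R")
      case True
      then have "x \<in> W``R \<and> y \<in> W``R" using p xy c RW by blast
      then show ?thesis unfolding EE_def xy by blast
    next
      case False
      then show ?thesis unfolding EE_def xy using xX by blast
    qed
  qed
  moreover have "EE X R (W``R) \<subseteq> X \<times> X" unfolding EE_def using sub by blast
  ultimately show "EE X R (W``R) \<in> U" using unif_up[OF u w] by blast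
qed

lemma path5:
  assumes u: "uniformity X U" and w: "W \<in> U" and w2: "W2 \<in> U"
    and s: "converse W = W" and h: "W O W \<subseteq> W2" "W2 O W2 \<subseteq> W1" "W1 O W1 \<subseteq> V"
    and x: "(n, x) \<in> W" and y: "y \<in> W``(W``(W``(W``{n})))"
  shows "(x, y) \<in> V"
proof -
  obtain a b c where abc: "(n, a) \<in> W" "(a, b) \<in> W" "(b, c) \<in> W" "(c, y) \<in> W" using y by blast
  have xn: "(x, n) \<in> W" using x s by (metis converse.intros)
  have 1: "(x, a) \<in> W2" using xn abc(1) h(1) by blast
  have 2: "(a, c) \<in> W2" using abc(2,3) h(1) by blast
  have "(c, y) \<in> W O W" using abc(4) unif_sq[OF u w] by blast
  then have 3: "(c, y) \<in> W2" using h(1) by blast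
  have 4: "(x, c) \<in> W1" using 1 2 h(2) by blast
  have "(c, y) \<in> W2 O W2" using 3 unif_sq[OF u w2] by blast
  then have 5: "(c, y) \<in> W1" using h(2) by blast
  show ?thesis using 4 5 h(3) by blast
qed

lemma good_single: "uniformity X U \<Longrightarrow> goodfam X U {(X, X, X, X)}"
proof -
  assume u: "uniformity X U"
  have "EE X X X = X \<times> X" unfolding EE_def by blast
  then have "adm X U (X, X, X, X)" unfolding adm_def qA_def qB_def qM_def qC_def
    using unif_XX[OF u] by simp
  then show ?thesis unfolding goodfam_def by blast
qed

lemma maxlarge:
  assumes u: "uniformity X U" and tb: "totally_bounded_unif X U"
    and mc: "min_cofinal U rev_incl C" and g: "goodfam X U Q"
    and mx: "\<forall>Q'. goodfam X U Q' \<and> Q \<subseteq> Q' \<longrightarrow> Q' = Q"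
  shows "ordLeq3 (card_of C) (card_of Q)"
proof -
  define I where "I F = X \<times> X \<inter> \<Inter> ((\<lambda>q. EE X (qB q) (qM q)) ` F)" for F
  have IU: "I F \<in> U" if "F \<in> Fpow Q" for F
  proof -
    have F: "finite F" "F \<subseteq> Q" using that unfolding Fpow_def by auto
    have "(\<lambda>q. EE X (qB q) (qM q)) ` F \<subseteq> U"
    proof
      fix e assume "e \<in> (\<lambda>q. EE X (qB q) (qM q)) ` F"
      then obtain q where q: "q \<in> F" "e = EE X (qB q) (qM q)" by blast
      have "adm X U q" using goodD(2)[OF g] q F by blast
      then show "e \<in> U" using q unfolding adm_def by blast
    qed
    then show ?thesis unfolding I_def using unif_fin_int[OF u] F by blast
  qed
  have ne: "Q \<noteq> {}"
  proof
    assume "Q = {}"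
    then have "{(X, X, X, X)} = Q" using mx good_single[OF u] by blast
    then show False using \<open>Q = {}\<close> by blast
  qed
  have mcC: "\<And>C'. cofinal_in U rev_incl C' \<Longrightarrow> ordLeq3 (card_of C) (card_of C')"
    using mc unfolding min_cofinal_def by blast
  show ?thesis
  proof (cases "\<forall>V\<in>U. \<exists>F\<in>Fpow Q. I F \<subseteq> V")
    case True
    show ?thesis
    proof (cases "finite Q")
      case True
      have QF: "Q \<in> Fpow Q" using True unfolding Fpow_def by blast
      have "cofinal_in U rev_incl {I Q}" unfolding cofinal_in_def rev_incl_def
      proof (intro conjI ballI)
        show "{I Q} \<subseteq> U" using IU QF by blast
        fix p assume "p \<in> U"
        then obtain F where F: "F \<in> Fpow Q" "I F \<subseteq> p" using \<open>\<forall>V\<in>U. \<exists>F\<in>Fpow Q. I F \<subseteq> V\<close> by blast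
        have "I Q \<subseteq> I F" using F(1) unfolding I_def Fpow_def by blast
        then show "\<exists>c\<in>{I Q}. c \<subseteq> p" using F(2) by blast
      qed
      then have "ordLeq3 (card_of C) (card_of {I Q})" using mcC by blast
      moreover have "ordLeq3 (card_of {I Q}) (card_of Q)" using card_of_singl_ordLeq[OF ne] .
      ultimately show ?thesis by (rule ordLeq_transitive)
    next
      case False
      have "cofinal_in U rev_incl (I ` Fpow Q)" unfolding cofinal_in_def rev_incl_def
      proof (intro conjI ballI)
        show "I ` Fpow Q \<subseteq> U" using IU by blast
        fix p assume "p \<in> U"
        then obtain F where F: "F \<in> Fpow Q" "I F \<subseteq> p" using \<open>\<forall>V\<in>U. \<exists>F\<in>Fpow Q. I F \<subseteq> V\<close> by blast
        then show "\<exists>c\<in>I ` Fpow Q. c \<subseteq> p" by blast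
      qed
      then have "ordLeq3 (card_of C) (card_of (I ` Fpow Q))" using mcC by blast
      moreover have "ordLeq3 (card_of (I ` Fpow Q)) (card_of (Fpow Q))" by (rule card_of_image)
      moreover have "ordIso2 (card_of (Fpow Q)) (card_of Q)" using card_of_Fpow_infinite False by blast
      ultimately show ?thesis by (meson ordLeq_transitive ordLeq_ordIso_trans)
    qed
  next
    case False
    then obtain V where V: "V \<in> U" "\<forall>F\<in>Fpow Q. \<not> I F \<subseteq> V" by blast
    obtain W1 where W1: "W1 \<in> U" "converse W1 = W1" "W1 O W1 \<subseteq> V" using unif_half_sym[OF u V(1)] by blast
    obtain W2 where W2: "W2 \<in> U" "converse W2 = W2" "W2 O W2 \<subseteq> W1" using unif_half_sym[OF u W1(1)] by blast
    obtain W where W: "W \<in> U" "converse W = W" "W O W \<subseteq> W2" using unif_half_sym[OF u W2(1)] by blast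
    obtain N where N: "finite N" "N \<subseteq> X" "(\<Union>n\<in>N. W``{n}) = X" using tbD[OF tb W(1)] by blast
    define r where "r n = (W``{n}, W``(W``{n}), W``(W``(W``{n})), W``(W``(W``(W``{n}))))" for n
    have rA: "qA (r n) = W``{n}" "qB (r n) = W``(W``{n})" "qM (r n) = W``(W``(W``{n}))"
      "qC (r n) = W``(W``(W``(W``{n})))" for n
      unfolding r_def qA_def qB_def qM_def qC_def by simp_all
    have ex: "\<exists>n\<in>N. \<forall>q\<in>Q. \<not> (qA (r n) \<subseteq> qB q \<and> qM q \<subseteq> qC (r n))"
    proof (rule ccontr)
      assume "\<not> ?thesis"
      then have "\<forall>n\<in>N. \<exists>q\<in>Q. qA (r n) \<subseteq> qB q \<and> qM q \<subseteq> qC (r n)" by blast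
      then obtain qq where qq: "\<forall>n\<in>N. qq n \<in> Q \<and> qA (r n) \<subseteq> qB (qq n) \<and> qM (qq n) \<subseteq> qC (r n)"
        by metis
      have FQ: "qq ` N \<in> Fpow Q" using qq N(1) unfolding Fpow_def by blast
      have "I (qq ` N) \<subseteq> V"
      proof
        fix p assume p: "p \<in> I (qq ` N)"
        obtain x y where xy: "p = (x, y)" by force
        have xX: "x \<in> X" "y \<in> X" using p xy unfolding I_def by auto
        then obtain n where n: "n \<in> N" "x \<in> W``{n}" using N(3) by blast
        have "(x, y) \<in> EE X (qB (qq n)) (qM (qq n))" using p xy n(1) unfolding I_def by blast
        moreover have "x \<in> qB (qq n)" using qq n rA(1) by blast
        ultimately have "y \<in> qM (qq n)" unfolding EE_def by blast
        then have "y \<in> W``(W``(W``(W``{n})))" using qq n(1) rA(4) by blast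
        moreover have "(n, x) \<in> W" using n(2) by blast
        ultimately show "p \<in> V" using path5[OF u W(1) W2(1) W(2) W(3) W2(3) W1(3)] xy by blast
      qed
      then show False using V(2) FQ by blast
    qed
    then obtain n where n: "n \<in> N" "\<forall>q\<in>Q. \<not> (qA (r n) \<subseteq> qB q \<and> qM q \<subseteq> qC (r n))" by blast
    have nX: "{n} \<subseteq> X" using n(1) N(2) by blast
    note e1 = EE_W[OF u W(1) W(2) nX]
    note e2 = EE_W[OF u W(1) W(2) e1(2)]
    note e3 = EE_W[OF u W(1) W(2) e2(2)]
    note e4 = EE_W[OF u W(1) W(2) e3(2)]
    have adm: "adm X U (r n)" unfolding adm_def rA using e1 e2 e3 e4 by blast
    have notin: "r n \<notin> Q"
    proof
      assume "r n \<in> Q"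
      then have "\<not> (qA (r n) \<subseteq> qB (r n) \<and> qM (r n) \<subseteq> qC (r n))" using n(2) by blast
      moreover have "qA (r n) \<subseteq> qB (r n)" "qM (r n) \<subseteq> qC (r n)" unfolding rA using e2(3) e4(3) by auto
      ultimately show False by blast
    qed
    have "goodfam X U (insert (r n) Q)" unfolding goodfam_def
    proof (intro conjI ballI impI)
      fix q assume "q \<in> insert (r n) Q"
      then show "adm X U q" using adm goodD(2)[OF g] by blast
    next
      fix q q' assume q: "q \<in> insert (r n) Q" "q' \<in> insert (r n) Q" "q \<noteq> q'"
      show "sep q q'"
      proof (cases "q = r n")
        case True
        then have "q' \<in> Q" using q by blast
        then show ?thesis unfolding sep_def True using n(2) by blast
      next
        case False
        then have qQ: "q \<in> Q" using q by blast
        show ?thesis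
        proof (cases "q' = r n")
          case True
          then show ?thesis unfolding sep_def True using n(2) qQ by blast
        next
          case False
          then show ?thesis using goodD(1)[OF g qQ _ q(3)] q(2) by blast
        qed
      qed
    qed
    then have "insert (r n) Q = Q" using mx by blast
    then show ?thesis using notin by blast
  qed
qed



lemma zorn_fam: "\<exists>Q. goodfam X U Q \<and> (\<forall>Q'. goodfam X U Q' \<and> Q \<subseteq> Q' \<longrightarrow> Q' = Q)"
proof -
  have "\<forall>Ch\<in>chains {Q. goodfam X U Q}. \<Union>Ch \<in> {Q. goodfam X U Q}"
  proof
    fix Ch assume ch: "Ch \<in> chains {Q. goodfam X U Q}"
    then have sub: "\<And>Q. Q \<in> Ch \<Longrightarrow> goodfam X U Q" unfolding chains_def by blast
    have cmp: "\<And>A B. A \<in> Ch \<Longrightarrow> B \<in> Ch \<Longrightarrow> A \<subseteq> B \<or> B \<subseteq> A"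
      using ch unfolding chains_def chain_subset_def by blast
    have "goodfam X U (\<Union>Ch)" unfolding goodfam_def
    proof (intro conjI ballI impI)
      fix q assume "q \<in> \<Union>Ch"
      then obtain A where "A \<in> Ch" "q \<in> A" by blast
      then show "adm X U q" using goodD(2)[OF sub] by blast
    next
      fix q q' assume q: "q \<in> \<Union>Ch" "q' \<in> \<Union>Ch" "q \<noteq> q'"
      then obtain A B where AB: "A \<in> Ch" "q \<in> A" "B \<in> Ch" "q' \<in> B" by blast
      show "sep q q'"
      proof (cases "A \<subseteq> B")
        case True
        then show ?thesis using goodD(1)[OF sub[OF AB(3)] _ AB(4) q(3)] AB by blast
      next
        case False
        then have "B \<subseteq> A" using cmp AB by blast
        then show ?thesis using goodD(1)[OF sub[OF AB(1)] AB(2) _ q(3)] AB by blast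
      qed
    qed
    then show "\<Union>Ch \<in> {Q. goodfam X U Q}" by blast
  qed
  from Zorn_Lemma[OF this] obtain M where M: "M \<in> {Q. goodfam X U Q}"
    "\<forall>Xa\<in>{Q. goodfam X U Q}. M \<subseteq> Xa \<longrightarrow> Xa = M" by blast
  then show ?thesis by blast
qed

lemma tukey_U_ge:
  assumes u: "uniformity X U" and tb: "totally_bounded_unif X U"
    and mc: "min_cofinal U rev_incl C" and k: "ordIso2 (card_of K) (card_of C)"
  shows "tukey_ge U rev_incl (fin_subsets K) (\<subseteq>)"
proof -
  obtain Q where g: "goodfam X U Q" and mx: "\<forall>Q'. goodfam X U Q' \<and> Q \<subseteq> Q' \<longrightarrow> Q' = Q"
    using zorn_fam by blast
  have "ordLeq3 (card_of C) (card_of Q)" using maxlarge[OF u tb mc g mx] .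
  then have "\<exists>f. inj_on f C \<and> f ` C \<subseteq> Q" unfolding card_of_ordLeq[symmetric] .
  then obtain h where h: "inj_on h C" "h ` C \<subseteq> Q" by blast
  have "\<exists>f. bij_betw f K C" using k unfolding card_of_ordIso[symmetric] .
  then obtain c where c: "bij_betw c K C" by blast
  define gg where "gg = h \<circ> c"
  have ginj: "inj_on gg K" unfolding gg_def
    using c h(1) by (metis bij_betw_def comp_inj_on)
  have gQ: "gg ` K \<subseteq> Q" unfolding gg_def using c h(2) unfolding bij_betw_def by auto
  define \<phi> where "\<phi> V = {k\<in>K. V \<subseteq> Ek X (gg k)}" for V
  have fin: "finite (\<phi> V)" if v: "V \<in> U" for V
  proof -
    have "gg ` \<phi> V \<subseteq> {q\<in>Q. V \<subseteq> Ek X q}" unfolding \<phi>_def using gQ by blast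
    then have "finite (gg ` \<phi> V)" using incidence[OF u tb v g] finite_subset by blast
    moreover have "inj_on gg (\<phi> V)" using ginj unfolding \<phi>_def by (rule inj_on_subset) blast
    ultimately show ?thesis using finite_imageD by blast
  qed
  have inF: "\<phi> V \<in> fin_subsets K" if "V \<in> U" for V
    using fin[OF that] unfolding fin_subsets_def \<phi>_def by blast
  have EkU: "Ek X (gg k) \<in> U" if "k \<in> K" for k
  proof -
    have "adm X U (gg k)" using goodD(2)[OF g] gQ that by blast
    then show ?thesis unfolding Ek_def adm_def using unif_int[OF u] by blast
  qed
  have "cofinal_in (fin_subsets K) (\<subseteq>) (\<phi> ` D)" if D: "cofinal_in U rev_incl D" for D
    unfolding cofinal_in_def
  proof (intro conjI ballI)
    show "\<phi> ` D \<subseteq> fin_subsets K" using D inF unfolding cofinal_in_def by blast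
    fix F assume F: "F \<in> fin_subsets K"
    define G where "G = X \<times> X \<inter> \<Inter> ((\<lambda>k. Ek X (gg k)) ` F)"
    have "(\<lambda>k. Ek X (gg k)) ` F \<subseteq> U" using EkU F unfolding fin_subsets_def by blast
    then have "G \<in> U" unfolding G_def using unif_fin_int[OF u] F unfolding fin_subsets_def by blast
    then obtain d where d: "d \<in> D" "d \<subseteq> G" using D unfolding cofinal_in_def rev_incl_def by blast
    have "F \<subseteq> \<phi> d" unfolding \<phi>_def using d(2) F unfolding G_def fin_subsets_def by blast
    then show "\<exists>c\<in>\<phi> ` D. F \<subseteq> c" using d(1) by blast
  qed
  moreover have "\<forall>V\<in>U. \<phi> V \<in> fin_subsets K" using inF by blast
  ultimately show ?thesis unfolding tukey_ge_def by blast
qed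

theorem mainTheorem7:
  fixes X :: "'a set" and \<U> :: "('a \<times> 'a) set set"
  assumes "uniformity X \<U>"
  shows "(\<forall>C (K :: 'k set). totally_bounded_unif X \<U> \<and> min_cofinal \<U> rev_incl C
            \<and> ordIso2 (card_of K) (card_of C)
          \<longrightarrow> tukey_eq \<U> rev_incl (fin_subsets K) (\<subseteq>))
       \<and> (\<forall>S C (K :: 'k set). S \<subseteq> X \<and> totally_bounded_subset \<U> S
            \<and> min_cofinal (restr_unif \<U> S) rev_incl C \<and> ordIso2 (card_of K) (card_of C)
          \<longrightarrow> tukey_eq (restr_unif \<U> S) rev_incl (fin_subsets K) (\<subseteq>))"
proof (intro conjI allI impI)
  fix C and K :: "'k set"
  assume h: "totally_bounded_unif X \<U> \<and> min_cofinal \<U> rev_incl C \<and> ordIso2 (card_of K) (card_of C)"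
  have cf: "cofinal_in \<U> rev_incl C" using h unfolding min_cofinal_def by blast
  have h1: "totally_bounded_unif X \<U>" "min_cofinal \<U> rev_incl C" "ordIso2 (card_of K) (card_of C)"
    using h by auto
  show "tukey_eq \<U> rev_incl (fin_subsets K) (\<subseteq>)" unfolding tukey_eq_def
    using tukey_U_ge[OF assms h1] tukey_fin_ge[OF assms cf h1(3)] by (rule conjI)
next
  fix S C and K :: "'k set"
  assume h: "S \<subseteq> X \<and> totally_bounded_subset \<U> S
            \<and> min_cofinal (restr_unif \<U> S) rev_incl C \<and> ordIso2 (card_of K) (card_of C)"
  have u: "uniformity S (restr_unif \<U> S)" using h by (intro restr_uniformity[OF assms]) blast
  have tb: "totally_bounded_unif S (restr_unif \<U> S)" using h unfolding totally_bounded_subset_def by blast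
  have cf: "cofinal_in (restr_unif \<U> S) rev_incl C" using h unfolding min_cofinal_def by blast
  have h1: "min_cofinal (restr_unif \<U> S) rev_incl C" "ordIso2 (card_of K) (card_of C)"
    using h by auto
  show "tukey_eq (restr_unif \<U> S) rev_incl (fin_subsets K) (\<subseteq>)" unfolding tukey_eq_def
    using tukey_U_ge[OF u tb h1] tukey_fin_ge[OF u cf h1(2)] by (rule conjI)
qed


end
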